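(* Let $\Gamma$ be a bipartite graph with vertex partition $V(\Gamma)=X\cup Y$, $X=\{x_1,\dots,x_{|X|}\}$ nonempty. Suppose that $d(x_i)=s_i$ for $1\le i\le |X|$, that $d(y)=k$ for all $y\in Y$, and that every pair of distinct vertices $y_1,y_2\in Y$ with $d_\Gamma(y_1,y_2)=2$ has exactly $\mu$ common neighbours. Then $$(|Y|-1)\mu\ \ge\ k\left(\frac{|Y|\cdot k}{|X|}-1\right),$$ with equality if and only if $s_1=s_2=\cdots=s_{|X|}$ and every pair of distinct vertices of $Y$ is at distance $2$.
   Context: $d(v)$ denotes the valency of a vertex $v$ and $d_\Gamma(\cdot,\cdot)$ the distance in $\Gamma$. *)

theory Defs
  imports Complex_Main
begin

definition simple_graph :: "'a set \<Rightarrow> ('a \<Rightarrow> 'a \<Rightarrow> bool) \<Rightarrow> bool" where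
  "simple_graph V E \<longleftrightarrow> finite V \<and> (\<forall>u v. E u v \<longrightarrow> u \<in> V \<and> v \<in> V)
     \<and> (\<forall>u v. E u v \<longrightarrow> E v u) \<and> (\<forall>v. \<not> E v v)"

definition bipartite_with :: "'a set \<Rightarrow> ('a \<Rightarrow> 'a \<Rightarrow> bool) \<Rightarrow> 'a set \<Rightarrow> 'a set \<Rightarrow> bool" where
  "bipartite_with V E X Y \<longleftrightarrow> simple_graph V E \<and> V = X \<union> Y \<and> X \<inter> Y = {}
     \<and> (\<forall>u v. E u v \<longrightarrow> (u \<in> X \<and> v \<in> Y) \<or> (u \<in> Y \<and> v \<in> X))"

definition neighbours :: "'a set \<Rightarrow> ('a \<Rightarrow> 'a \<Rightarrow> bool) \<Rightarrow> 'a \<Rightarrow> 'a set" where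
  "neighbours V E v = {w \<in> V. E v w}"

definition degree :: "'a set \<Rightarrow> ('a \<Rightarrow> 'a \<Rightarrow> bool) \<Rightarrow> 'a \<Rightarrow> nat" where
  "degree V E v = card (neighbours V E v)"

text \<open>A walk is a nonempty list of vertices of V, consecutive ones adjacent.
  A walk with list xs has length (number of edges) length xs - 1.\<close>
definition is_walk :: "'a set \<Rightarrow> ('a \<Rightarrow> 'a \<Rightarrow> bool) \<Rightarrow> 'a list \<Rightarrow> bool" where
  "is_walk V E xs \<longleftrightarrow> xs \<noteq> [] \<and> set xs \<subseteq> V \<and> (\<forall>i. Suc i < length xs \<longrightarrow> E (xs ! i) (xs ! Suc i))"

definition has_walk :: "'a set \<Rightarrow> ('a \<Rightarrow> 'a \<Rightarrow> bool) \<Rightarrow> 'a \<Rightarrow> 'a \<Rightarrow> nat \<Rightarrow> bool" where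
  "has_walk V E u v n \<longleftrightarrow> (\<exists>xs. is_walk V E xs \<and> length xs = Suc n \<and> hd xs = u \<and> last xs = v)"

definition graph_dist_is :: "'a set \<Rightarrow> ('a \<Rightarrow> 'a \<Rightarrow> bool) \<Rightarrow> 'a \<Rightarrow> 'a \<Rightarrow> nat \<Rightarrow> bool" where
  "graph_dist_is V E u v n \<longleftrightarrow> has_walk V E u v n \<and> (\<forall>m<n. \<not> has_walk V E u v m)"

end

theory Submission
  imports Defs
begin

theorem lemma3p2:
  fixes V X Y :: "'a set" and E :: "'a \<Rightarrow> 'a \<Rightarrow> bool"
    and s :: "'a \<Rightarrow> nat" and k \<mu> :: nat
  assumes bip: "bipartite_with V E X Y"
    and X_ne: "X \<noteq> {}"
    and Y_ne: "Y \<noteq> {}"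
    and mu_pos: "\<mu> > 0"
    and degX: "\<forall>x\<in>X. degree V E x = s x"
    and degY: "\<forall>y\<in>Y. degree V E y = k"
    and mu: "\<forall>y1\<in>Y. \<forall>y2\<in>Y. y1 \<noteq> y2 \<and> graph_dist_is V E y1 y2 2 \<longrightarrow>
               card (neighbours V E y1 \<inter> neighbours V E y2) = \<mu>"
  shows "(real (card Y) - 1) * real \<mu> \<ge> real k * (real (card Y) * real k / real (card X) - 1)
         \<and> ((real (card Y) - 1) * real \<mu> = real k * (real (card Y) * real k / real (card X) - 1)
             \<longleftrightarrow> (\<forall>x1\<in>X. \<forall>x2\<in>X. s x1 = s x2) \<and>
                 (\<forall>y1\<in>Y. \<forall>y2\<in>Y. y1 \<noteq> y2 \<longrightarrow> graph_dist_is V E y1 y2 2))"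
proof -
  have finV: "finite V" and Vdef: "V = X \<union> Y" and disj: "X \<inter> Y = {}"
    and Ein: "\<And>u v. E u v \<Longrightarrow> u \<in> V \<and> v \<in> V"
    and Esym: "\<And>u v. E u v \<Longrightarrow> E v u" and Eirr: "\<And>v. \<not> E v v"
    and Ebip: "\<And>u v. E u v \<Longrightarrow> (u \<in> X \<and> v \<in> Y) \<or> (u \<in> Y \<and> v \<in> X)"
    using bip unfolding bipartite_with_def simple_graph_def by blast+
  have finX: "finite X" and finY: "finite Y" using finV Vdef by auto
  let ?N = "neighbours V E"
  define ind :: "'a \<Rightarrow> 'a \<Rightarrow> real" where "ind u v = (if E u v then 1 else 0)" for u v
  have NX: "?N x = {y\<in>Y. E x y}" if "x \<in> X" for x
    using that Ebip Ein disj unfolding neighbours_def by blast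
  have NY: "?N y = {x\<in>X. E y x}" if "y \<in> Y" for y
    using that Ebip Ein disj unfolding neighbours_def by blast
  have sx: "real (s x) = (\<Sum>y\<in>Y. ind x y)" if "x \<in> X" for x
  proof -
    have "real (s x) = real (card {y\<in>Y. E x y})" using degX that NX unfolding degree_def by simp
    also have "\<dots> = (\<Sum>y\<in>Y. ind x y)" unfolding ind_def
      using finY by (simp add: sum.If_cases Int_def)
    finally show ?thesis .
  qed
  have ky: "real k = (\<Sum>x\<in>X. ind x y)" if "y \<in> Y" for y
  proof -
    have "real k = real (card {x\<in>X. E y x})" using degY that NY unfolding degree_def by simp
    also have "\<dots> = real (card {x\<in>X. E x y})" using Esym by metis
    also have "\<dots> = (\<Sum>x\<in>X. ind x y)" unfolding ind_def
      using finX by (simp add: sum.If_cases Int_def)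
    finally show ?thesis .
  qed
  define c where "c y1 y2 = card (?N y1 \<inter> ?N y2)" for y1 y2
  have cy: "real (c y1 y2) = (\<Sum>x\<in>X. ind x y1 * ind x y2)" if "y1 \<in> Y" "y2 \<in> Y" for y1 y2
  proof -
    have "?N y1 \<inter> ?N y2 = {x\<in>X. E x y1 \<and> E x y2}" using NY[OF that(1)] NY[OF that(2)] Esym by blast
    then have "real (c y1 y2) = real (card {x\<in>X. E x y1 \<and> E x y2})" unfolding c_def by simp
    also have "\<dots> = (\<Sum>x\<in>X. (if E x y1 \<and> E x y2 then 1 else 0::real))"
      using finX by (simp add: sum.If_cases Int_def)
    also have "\<dots> = (\<Sum>x\<in>X. ind x y1 * ind x y2)"
      by (intro sum.cong refl) (simp add: ind_def)
    finally show ?thesis .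
  qed
  define S1 where "S1 = (\<Sum>x\<in>X. real (s x))"
  define S2 where "S2 = (\<Sum>x\<in>X. real (s x) ^ 2)"
  define Xr where "Xr = real (card X)"
  define Yr where "Yr = real (card Y)"
  have Xpos: "Xr > 0" using finX X_ne Xr_def by (simp add: card_gt_0_iff)
  have Ypos: "Yr > 0" using finY Y_ne Yr_def by (simp add: card_gt_0_iff)
  have S1eq: "S1 = Yr * k"
  proof -
    have "S1 = (\<Sum>x\<in>X. \<Sum>y\<in>Y. ind x y)" unfolding S1_def using sx by simp
    also have "\<dots> = (\<Sum>y\<in>Y. \<Sum>x\<in>X. ind x y)" by (rule sum.swap)
    also have "\<dots> = (\<Sum>y\<in>Y. real k)" using ky by simp
    finally show ?thesis by (simp add: Yr_def)
  qed
  have S2eq: "S2 = (\<Sum>y1\<in>Y. \<Sum>y2\<in>Y. real (c y1 y2))"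
  proof -
    have "S2 = (\<Sum>x\<in>X. \<Sum>y1\<in>Y. \<Sum>y2\<in>Y. ind x y1 * ind x y2)"
      unfolding S2_def using sx by (simp add: power2_eq_square sum_product)
    also have "\<dots> = (\<Sum>y1\<in>Y. \<Sum>x\<in>X. \<Sum>y2\<in>Y. ind x y1 * ind x y2)" by (rule sum.swap)
    also have "\<dots> = (\<Sum>y1\<in>Y. \<Sum>y2\<in>Y. \<Sum>x\<in>X. ind x y1 * ind x y2)"
      by (rule sum.cong[OF refl], rule sum.swap)
    also have "\<dots> = (\<Sum>y1\<in>Y. \<Sum>y2\<in>Y. real (c y1 y2))" using cy by simp
    finally show ?thesis .
  qed
  define Off where "Off = (\<Sum>y1\<in>Y. \<Sum>y2\<in>Y-{y1}. real (c y1 y2))"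
  have cdiag: "c y y = k" if "y \<in> Y" for y using degY that unfolding c_def degree_def by simp
  have S2off: "S2 = Yr * k + Off"
  proof -
    have "S2 = (\<Sum>y1\<in>Y. real (c y1 y1) + (\<Sum>y2\<in>Y-{y1}. real (c y1 y2)))"
      unfolding S2eq using finY by (intro sum.cong refl) (simp add: sum.remove)
    also have "\<dots> = (\<Sum>y1\<in>Y. real k) + Off" unfolding Off_def sum.distrib using cdiag by simp
    finally show ?thesis by (simp add: Yr_def)
  qed
  have d2: "graph_dist_is V E y1 y2 2 \<longleftrightarrow> ?N y1 \<inter> ?N y2 \<noteq> {}"
    if "y1 \<in> Y" "y2 \<in> Y" "y1 \<noteq> y2" for y1 y2
  proof
    assume "graph_dist_is V E y1 y2 2"
    then obtain xs where w: "is_walk V E xs" "length xs = 3" "hd xs = y1" "last xs = y2"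
      unfolding graph_dist_is_def has_walk_def by auto
    then obtain a b d where xs: "xs = [a,b,d]"
      by (cases xs; simp; case_tac list; simp; case_tac lista; simp)
    have "E a b" "E b d" "b \<in> V" using w(1) unfolding xs is_walk_def by auto
    then have "b \<in> ?N y1 \<inter> ?N y2" using w xs Esym unfolding neighbours_def by auto
    then show "?N y1 \<inter> ?N y2 \<noteq> {}" by blast
  next
    assume "?N y1 \<inter> ?N y2 \<noteq> {}"
    then obtain b where b: "b \<in> V" "E y1 b" "E y2 b" unfolding neighbours_def by auto
    have "is_walk V E [y1,b,y2]" using b Esym that Vdef unfolding is_walk_def
      by (auto simp: less_Suc_eq nth_Cons split: nat.splits)
    then have hw: "has_walk V E y1 y2 2" unfolding has_walk_def
      by (intro exI[of _ "[y1,b,y2]"]) simp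
    have "\<not> has_walk V E y1 y2 m" if "m < 2" for m
    proof
      assume "has_walk V E y1 y2 m"
      then obtain xs where w: "is_walk V E xs" "length xs = Suc m" "hd xs = y1" "last xs = y2"
        unfolding has_walk_def by auto
      show False
      proof (cases m)
        case 0
        then obtain a where "xs = [a]" using w(2) by (cases xs) auto
        then show False using w \<open>y1 \<noteq> y2\<close> by simp
      next
        case (Suc m')
        then have "m = 1" using \<open>m < 2\<close> by simp
        then obtain a d where xs: "xs = [a,d]" using w(2)
          by (cases xs; simp; case_tac list; simp)
        then have "E y1 y2" using w unfolding is_walk_def by auto
        then show False using Ebip \<open>y1 \<in> Y\<close> \<open>y2 \<in> Y\<close> disj by blast
      qed
    qed
    then show "graph_dist_is V E y1 y2 2" using hw unfolding graph_dist_is_def by blast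
  qed
  have cboth: "c y1 y2 \<le> \<mu> \<and> (c y1 y2 = \<mu> \<longleftrightarrow> graph_dist_is V E y1 y2 2)"
    if "y1 \<in> Y" "y2 \<in> Y" "y1 \<noteq> y2" for y1 y2
  proof (cases "graph_dist_is V E y1 y2 2")
    case True
    then show ?thesis using mu that unfolding c_def by auto
  next
    case False
    then have "?N y1 \<inter> ?N y2 = {}" using d2[OF that] by blast
    then show ?thesis using False mu_pos unfolding c_def by auto
  qed
  have cle: "c y1 y2 \<le> \<mu>" and cpos: "c y1 y2 = \<mu> \<longleftrightarrow> graph_dist_is V E y1 y2 2"
    if "y1 \<in> Y" "y2 \<in> Y" "y1 \<noteq> y2" for y1 y2
    using cboth[OF that] by auto
  define Full where "Full = (\<Sum>y1\<in>Y. \<Sum>y2\<in>Y-{y1}. real \<mu>)"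
  have Fulleq: "Full = Yr * (Yr - 1) * \<mu>"
    unfolding Full_def Yr_def using finY Y_ne by (simp add: card_Diff_singleton of_nat_diff card_gt_0_iff Suc_le_eq)
  have OffB: "Off \<le> Full"
    unfolding Off_def Full_def by (intro sum_mono) (use cle in auto)
  have OffE: "Off = Full \<longleftrightarrow> (\<forall>y1\<in>Y. \<forall>y2\<in>Y. y1 \<noteq> y2 \<longrightarrow> graph_dist_is V E y1 y2 2)"
  proof
    assume eq: "Off = Full"
    show "\<forall>y1\<in>Y. \<forall>y2\<in>Y. y1 \<noteq> y2 \<longrightarrow> graph_dist_is V E y1 y2 2"
    proof (intro ballI impI)
      fix y1 y2 assume h: "y1 \<in> Y" "y2 \<in> Y" "y1 \<noteq> y2"
      have le1: "(\<Sum>y2\<in>Y-{y}. real (c y y2)) \<le> (\<Sum>y2\<in>Y-{y}. real \<mu>)" if "y \<in> Y" for y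
        by (intro sum_mono) (use cle that in auto)
      have "(\<Sum>y2\<in>Y-{y1}. real (c y1 y2)) = (\<Sum>y2\<in>Y-{y1}. real \<mu>)"
        using sum_mono_inv[OF eq[unfolded Off_def Full_def] le1 h(1) finY] .
      then have "real (c y1 y2) = real \<mu>"
        using sum_mono_inv[where f="\<lambda>y2. real (c y1 y2)" and g="\<lambda>_. real \<mu>" and I="Y-{y1}" and i=y2] cle h finY by auto
      then show "graph_dist_is V E y1 y2 2" using cpos h by simp
    qed
  next
    assume "\<forall>y1\<in>Y. \<forall>y2\<in>Y. y1 \<noteq> y2 \<longrightarrow> graph_dist_is V E y1 y2 2"
    then show "Off = Full" unfolding Off_def Full_def
      by (intro sum.cong refl) (use cpos in auto)
  qed
  have CS: "Xr * (Xr * S2 - S1^2) = (\<Sum>x\<in>X. (Xr * real (s x) - S1)^2)"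
  proof -
    have "(\<Sum>x\<in>X. (Xr * real (s x) - S1)^2)
        = (\<Sum>x\<in>X. Xr^2 * real (s x)^2 - 2 * Xr * S1 * real (s x) + S1^2)"
      by (simp add: power2_eq_square algebra_simps)
    also have "\<dots> = Xr^2 * S2 - 2 * Xr * S1 * S1 + Xr * S1^2"
      unfolding S2_def S1_def Xr_def by (simp add: sum.distrib sum_subtractf sum_distrib_left)
    finally show ?thesis by (simp add: power2_eq_square algebra_simps)
  qed
  have CSge: "Xr * S2 - S1^2 \<ge> 0"
  proof -
    have "Xr * (Xr * S2 - S1^2) \<ge> 0" unfolding CS by (intro sum_nonneg) auto
    then show ?thesis using Xpos by (simp add: zero_le_mult_iff)
  qed
  have CSE: "Xr * S2 - S1^2 = 0 \<longleftrightarrow> (\<forall>x1\<in>X. \<forall>x2\<in>X. s x1 = s x2)"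
  proof
    assume "Xr * S2 - S1^2 = 0"
    then have "(\<Sum>x\<in>X. (Xr * real (s x) - S1)^2) = 0" using CS by simp
    then have all: "\<forall>x\<in>X. (Xr * real (s x) - S1)^2 = 0"
      using sum_nonneg_eq_0_iff[OF finX, of "\<lambda>x. (Xr * real (s x) - S1)^2"] by simp
    show "\<forall>x1\<in>X. \<forall>x2\<in>X. s x1 = s x2"
    proof (intro ballI)
      fix x1 x2 assume "x1 \<in> X" "x2 \<in> X"
      then have "Xr * real (s x1) - S1 = 0" "Xr * real (s x2) - S1 = 0" using all by auto
      then have "Xr * real (s x1) = Xr * real (s x2)" by simp
      then show "s x1 = s x2" using Xpos by simp
    qed
  next
    assume h: "\<forall>x1\<in>X. \<forall>x2\<in>X. s x1 = s x2"
    obtain x0 where x0: "x0 \<in> X" using X_ne by auto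
    have "S1 = (\<Sum>x\<in>X. real (s x0))" unfolding S1_def
      by (rule sum.cong[OF refl]) (use h x0 in metis)
    then have "S1 = Xr * s x0" unfolding Xr_def by simp
    then have "\<forall>x\<in>X. Xr * real (s x) - S1 = 0"
    proof (intro ballI)
      fix x assume "x \<in> X"
      then have "s x = s x0" using h x0 by blast
      then show "Xr * real (s x) - S1 = 0" using \<open>S1 = Xr * s x0\<close> by simp
    qed
    then have "(\<Sum>x\<in>X. (Xr * real (s x) - S1)^2) = 0" by simp
    then have "Xr * (Xr * S2 - S1^2) = 0" using CS by simp
    then show "Xr * S2 - S1^2 = 0" using Xpos by simp
  qed
  have key: "Xr * Yr * ((Yr - 1) * \<mu> - k * (Yr * k / Xr - 1)) = Xr * (Full - Off) + (Xr * S2 - S1^2)"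
  proof -
    have a: "Xr * Yr * (k * (Yr * k / Xr)) = (Yr * k)^2" using Xpos by (simp add: power2_eq_square)
    have "Xr * Yr * ((Yr - 1) * \<mu> - k * (Yr * k / Xr - 1))
       = Xr * Yr * (Yr - 1) * \<mu> - Xr * Yr * (k * (Yr * k / Xr)) + Xr * Yr * k"
      by (simp add: algebra_simps)
    also have "\<dots> = Xr * Yr * (Yr - 1) * \<mu> - (Yr * k)^2 + Xr * Yr * k" using a by simp
    also have "\<dots> = Xr * (Full - Off) + (Xr * S2 - S1^2)"
      unfolding Fulleq S1eq using S2off by (simp add: algebra_simps)
    finally show ?thesis .
  qed
  have pos: "Xr * Yr > 0" using Xpos Ypos by simp
  have A: "Xr * (Full - Off) \<ge> 0" using OffB Xpos by simp
  have ge: "(Yr - 1) * \<mu> - k * (Yr * k / Xr - 1) \<ge> 0"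
  proof -
    have "Xr * Yr * ((Yr - 1) * \<mu> - k * (Yr * k / Xr - 1)) \<ge> 0" unfolding key using A CSge by linarith
    then show ?thesis using pos by (simp add: zero_le_mult_iff)
  qed
  have eqv: "(Yr - 1) * \<mu> = k * (Yr * k / Xr - 1) \<longleftrightarrow> Full = Off \<and> Xr * S2 - S1^2 = 0"
  proof
    assume "(Yr - 1) * \<mu> = k * (Yr * k / Xr - 1)"
    then have "Xr * (Full - Off) + (Xr * S2 - S1^2) = 0" using key by simp
    then have z: "Xr * (Full - Off) = 0" "Xr * S2 - S1^2 = 0" using A CSge by linarith+
    then have "Full - Off = 0" using Xpos by simp
    then show "Full = Off \<and> Xr * S2 - S1^2 = 0" using z by simp
  next
    assume "Full = Off \<and> Xr * S2 - S1^2 = 0"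
    then have "Xr * Yr * ((Yr - 1) * \<mu> - k * (Yr * k / Xr - 1)) = 0" using key by simp
    then show "(Yr - 1) * \<mu> = k * (Yr * k / Xr - 1)" using Xpos Ypos by simp
  qed
  show ?thesis using ge eqv OffE CSE unfolding Xr_def Yr_def by auto
qed

end
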